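(* Consider a sequence of finite populations whose size $N\to\infty$, each equipped with its own randomized design, exposure mapping and fixed potential outcomes as in the context, and fix two exposures $d_k,d_l$. Assume: (Condition 1) there is a constant $c<\infty$, not depending on $N$, such that $|y_i(d)|/\pi_i(d)\le c$ for all units $i$, all exposures $d$, and all populations in the sequence; (Condition 2) for each pair $(a,b)\in\{k,l\}^2$, setting $g_{ij}=0$ if $\pi_{ij}(d_a,d_b)=\pi_i(d_a)\pi_j(d_b)$ and $g_{ij}=1$ otherwise, one has $\sum_{i=1}^N\sum_{j=1}^N g_{ij}=o(N^2)$. Then $\widehat{\tau_{HT}}(d_k,d_l)-\tau(d_k,d_l)\to 0$ in probability as $N\to\infty$, where $\widehat{\tau_{HT}}(d_k,d_l)=\frac1N\sum_{i=1}^N\Big[\frac{\mathbf{I}(D_i=d_k)y_i(d_k)}{\pi_i(d_k)}-\frac{\mathbf{I}(D_i=d_l)y_i(d_l)}{\pi_i(d_l)}\Big]$ and $\tau(d_k,d_l)=\frac1N\sum_{i=1}^N[y_i(d_k)-y_i(d_l)]$.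
   Context: For each population in the sequence: units $i=1,\dots,N$; a random treatment assignment vector $\mathbf{Z}$ with known distribution on a finite set $\Omega$; an exposure mapping $f:\Omega\times\Theta\to\Delta$ (finite set of exposures) with unit traits $\theta_i$, giving $D_i=f(\mathbf{Z},\theta_i)$; $\pi_i(d)=\Pr(D_i=d)\in(0,1)$; $\pi_{ij}(d,d')=\Pr(D_i=d,D_j=d')$ (so $\pi_{ij}(d,d)$ is the joint probability that both $i$ and $j$ receive $d$). Potential outcomes $y_i(d)$ are fixed reals and the observed outcome is $y_i(D_i)$. The design, exposure mapping and potential outcomes may change along the sequence (in the paper the sequence is formed by pooling $B$ subpopulations of sizes $n_b\ge1$ and letting $B\to\infty$). *)

theory Defs
  imports "HOL-Probability.Probability" "HOL-Library.Landau_Symbols"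
begin

text \<open>One population: assignment distribution Z (a pmf with finite support Omega),
exposure mapping f, unit traits theta; unit i (i < N) gets exposure D_i = f Z (theta i).\<close>

definition expo_prob :: "'z pmf \<Rightarrow> ('z \<Rightarrow> 't \<Rightarrow> 'd) \<Rightarrow> (nat \<Rightarrow> 't) \<Rightarrow> nat \<Rightarrow> 'd \<Rightarrow> real" where
  "expo_prob Z f \<theta> i d = measure_pmf.prob Z {z. f z (\<theta> i) = d}"

definition joint_expo_prob :: "'z pmf \<Rightarrow> ('z \<Rightarrow> 't \<Rightarrow> 'd) \<Rightarrow> (nat \<Rightarrow> 't) \<Rightarrow> nat \<Rightarrow> nat \<Rightarrow> 'd \<Rightarrow> 'd \<Rightarrow> real" where
  "joint_expo_prob Z f \<theta> i j d d' = measure_pmf.prob Z {z. f z (\<theta> i) = d \<and> f z (\<theta> j) = d'}"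

definition HT_est :: "nat \<Rightarrow> 'z pmf \<Rightarrow> ('z \<Rightarrow> 't \<Rightarrow> 'd) \<Rightarrow> (nat \<Rightarrow> 't) \<Rightarrow> (nat \<Rightarrow> 'd \<Rightarrow> real) \<Rightarrow> 'd \<Rightarrow> 'd \<Rightarrow> 'z \<Rightarrow> real" where
  "HT_est N Z f \<theta> y dk dl z = (1 / real N) * (\<Sum>i<N.
      (if f z (\<theta> i) = dk then 1 else 0) * y i dk / expo_prob Z f \<theta> i dk
    - (if f z (\<theta> i) = dl then 1 else 0) * y i dl / expo_prob Z f \<theta> i dl)"

definition avg_effect :: "nat \<Rightarrow> (nat \<Rightarrow> 'd \<Rightarrow> real) \<Rightarrow> 'd \<Rightarrow> 'd \<Rightarrow> real" where
  "avg_effect N y dk dl = (1 / real N) * (\<Sum>i<N. y i dk - y i dl)"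

definition dep_pairs :: "nat \<Rightarrow> 'z pmf \<Rightarrow> ('z \<Rightarrow> 't \<Rightarrow> 'd) \<Rightarrow> (nat \<Rightarrow> 't) \<Rightarrow> 'd \<Rightarrow> 'd \<Rightarrow> nat" where
  "dep_pairs N Z f \<theta> a b = card {(i, j). i < N \<and> j < N \<and>
      joint_expo_prob Z f \<theta> i j a b \<noteq> expo_prob Z f \<theta> i a * expo_prob Z f \<theta> j b}"

end

theory Submission imports Defs begin

lemma card_pairs_sum:
  "real (card {(i, j). i < (N::nat) \<and> j < N \<and> P i j}) = (\<Sum>i<N. \<Sum>j<N. if P i j then 1 else (0::real))"
proof -
  have "{(i, j). i < N \<and> j < N \<and> P i j} = {x \<in> {..<N} \<times> {..<N}. P (fst x) (snd x)}" by auto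
  hence "real (card {(i, j). i < (N::nat) \<and> j < N \<and> P i j}) = (\<Sum>x\<in>{x \<in> {..<N} \<times> {..<N}. P (fst x) (snd x)}. 1::real)"
    by simp
  also have "\<dots> = (\<Sum>x\<in>{..<N} \<times> {..<N}. if P (fst x) (snd x) then 1 else 0)"
    by (rule sum.inter_filter) (intro finite_cartesian_product finite_lessThan)
  also have "\<dots> = (\<Sum>i<N. \<Sum>j<N. if P i j then 1 else (0::real))"
    by (simp add: sum.cartesian_product case_prod_beta)
  finally show ?thesis .
qed

lemma prob_sum:
  assumes fin: "finite (set_pmf Z)"
  shows "measure_pmf.prob Z {z. P z} = (\<Sum>z\<in>set_pmf Z. pmf Z z * (if P z then 1 else 0))"
proof -
  have "measure_pmf.prob Z {z. P z} = measure_pmf.prob Z ({z. P z} \<inter> set_pmf Z)"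
    by (simp add: measure_Int_set_pmf)
  also have "\<dots> = sum (pmf Z) ({z. P z} \<inter> set_pmf Z)"
    using fin by (simp add: measure_measure_pmf_finite)
  also have "({z. P z} \<inter> set_pmf Z) = {z \<in> set_pmf Z. P z}" by auto
  also have "sum (pmf Z) {z \<in> set_pmf Z. P z} = (\<Sum>z\<in>set_pmf Z. if P z then pmf Z z else 0)"
    using fin by (rule sum.inter_filter)
  finally show ?thesis by (simp add: if_distrib cong: if_cong)
qed

lemma four_div: "(x::real) * (a + b + c + d) / (n * e) = x * (a / n + b / n + c / n + d / n) / e"
  by (simp add: add_divide_distrib[symmetric] divide_divide_eq_left mult.commute)

lemma bound:
  fixes Z :: "'z pmf" and f :: "'z \<Rightarrow> 't \<Rightarrow> 'd" and \<theta> :: "nat \<Rightarrow> 't"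
    and y :: "nat \<Rightarrow> 'd \<Rightarrow> real" and N :: nat and c \<epsilon> :: real
  assumes fin: "finite (set_pmf Z)"
    and pos: "\<And>i d. i < N \<Longrightarrow> d \<in> {dk, dl} \<Longrightarrow> 0 < expo_prob Z f \<theta> i d"
    and cb: "\<And>i d. i < N \<Longrightarrow> d \<in> {dk, dl} \<Longrightarrow> \<bar>y i d\<bar> / expo_prob Z f \<theta> i d \<le> c"
    and eps: "\<epsilon> > 0" and Npos: "N > 0"
  shows "measure_pmf.prob Z {z. \<bar>HT_est N Z f \<theta> y dk dl z - avg_effect N y dk dl\<bar> > \<epsilon>}
     \<le> c\<^sup>2 / \<epsilon>\<^sup>2 * (real (dep_pairs N Z f \<theta> dk dk) / (real N)\<^sup>2 + real (dep_pairs N Z f \<theta> dk dl) / (real N)\<^sup>2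
          + real (dep_pairs N Z f \<theta> dl dk) / (real N)\<^sup>2 + real (dep_pairs N Z f \<theta> dl dl) / (real N)\<^sup>2)"
proof -
  define S where "S = set_pmf Z"
  define p where "p = pmf Z"
  define \<pi> where "\<pi> = expo_prob Z f \<theta>"
  define I where "I = (\<lambda>i d z. if f z (\<theta> i) = d then 1 else (0::real))"
  define r where "r = (\<lambda>i d. y i d / \<pi> i d)"
  define A where "A = (\<lambda>i d z. (I i d z - \<pi> i d) * r i d)"
  define J where "J = joint_expo_prob Z f \<theta>"
  define g where "g = (\<lambda>a b i j. if J i j a b \<noteq> \<pi> i a * \<pi> j b then 1 else (0::real))"
  have finS: "finite S" using fin S_def by simp
  have pnn: "\<And>z. p z \<ge> 0" unfolding p_def by simp
  have sum1: "sum p S = 1" unfolding p_def S_def using sum_pmf_eq_1[OF fin, of Z] by simp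
  have piS: "\<pi> i d = (\<Sum>z\<in>S. p z * I i d z)" for i d
    unfolding \<pi>_def expo_prob_def I_def S_def p_def by (rule prob_sum[OF fin])
  have JS: "J i j a b = (\<Sum>z\<in>S. p z * (I i a z * I j b z))" for i j a b
    unfolding J_def joint_expo_prob_def I_def S_def p_def by (subst prob_sum[OF fin]) (intro sum.cong, auto)
  have pi01: "0 \<le> \<pi> i d \<and> \<pi> i d \<le> 1" for i d
    unfolding \<pi>_def expo_prob_def by simp
  have J01: "0 \<le> J i j a b \<and> J i j a b \<le> 1" for i j a b
    unfolding J_def joint_expo_prob_def by simp
  have cov: "(\<Sum>z\<in>S. p z * (A i a z * A j b z)) = r i a * r j b * (J i j a b - \<pi> i a * \<pi> j b)" for i j a b
  proof -
    have pw: "p z * (A i a z * A j b z) = r i a * r j b * (p z * (I i a z * I j b z) - \<pi> i a * (p z * I j b z)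
        - \<pi> j b * (p z * I i a z) + \<pi> i a * \<pi> j b * p z)" for z
      by (simp add: A_def algebra_simps)
    have "(\<Sum>z\<in>S. p z * (A i a z * A j b z)) = r i a * r j b * ((\<Sum>z\<in>S. p z * (I i a z * I j b z)) - \<pi> i a * (\<Sum>z\<in>S. p z * I j b z)
        - \<pi> j b * (\<Sum>z\<in>S. p z * I i a z) + \<pi> i a * \<pi> j b * sum p S)"
    proof -
      have "(\<Sum>z\<in>S. p z * (A i a z * A j b z)) = r i a * r j b * (\<Sum>z\<in>S. p z * (I i a z * I j b z) - \<pi> i a * (p z * I j b z)
        - \<pi> j b * (p z * I i a z) + \<pi> i a * \<pi> j b * p z)"
        by (simp add: pw sum_distrib_left)
      also have "(\<Sum>z\<in>S. p z * (I i a z * I j b z) - \<pi> i a * (p z * I j b z)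
        - \<pi> j b * (p z * I i a z) + \<pi> i a * \<pi> j b * p z) = ((\<Sum>z\<in>S. p z * (I i a z * I j b z)) - \<pi> i a * (\<Sum>z\<in>S. p z * I j b z)
        - \<pi> j b * (\<Sum>z\<in>S. p z * I i a z) + \<pi> i a * \<pi> j b * sum p S)"
        by (simp add: sum.distrib sum_subtractf sum_distrib_left)
      finally show ?thesis .
    qed
    also have "\<dots> = r i a * r j b * (J i j a b - \<pi> i a * \<pi> j b)"
      by (simp add: JS[symmetric] piS[symmetric] sum1)
    finally show ?thesis .
  qed
  have rb: "\<bar>r i d\<bar> \<le> c" if "i < N" "d \<in> {dk, dl}" for i d
    using cb[OF that] pos[OF that] by (simp add: r_def \<pi>_def abs_divide)
  have covb: "\<bar>\<Sum>z\<in>S. p z * (A i a z * A j b z)\<bar> \<le> c * c * g a b i j"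
    if "i < N" "j < N" "a \<in> {dk, dl}" "b \<in> {dk, dl}" for i j a b
  proof (cases "J i j a b = \<pi> i a * \<pi> j b")
    case True thus ?thesis by (simp add: cov g_def)
  next
    case False
    have q1: "0 \<le> \<pi> i a * \<pi> j b" using pi01[of i a] pi01[of j b] by simp
    have q2: "\<pi> i a * \<pi> j b \<le> 1" using pi01[of i a] pi01[of j b] by (simp add: mult_le_one)
    have d1: "\<bar>J i j a b - \<pi> i a * \<pi> j b\<bar> \<le> 1"
      using J01[of i j a b] q1 q2 by (simp only: abs_le_iff) linarith
    have "\<bar>r i a * r j b\<bar> \<le> c * c"
      using rb[OF that(1,3)] rb[OF that(2,4)] by (simp add: abs_mult mult_mono)
    hence "\<bar>r i a * r j b * (J i j a b - \<pi> i a * \<pi> j b)\<bar> \<le> c * c * 1"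
      using d1 unfolding abs_mult by (rule mult_mono) auto
    thus ?thesis using False by (simp add: cov g_def)
  qed
  define W where "W = (\<lambda>z. HT_est N Z f \<theta> y dk dl z - avg_effect N y dk dl)"
  define X where "X = (\<lambda>i z. A i dk z - A i dl z)"
  have Wexp: "W z = (1 / real N) * (\<Sum>i<N. X i z)" for z
  proof -
    have "(if f z (\<theta> i) = dk then 1 else 0) * y i dk / expo_prob Z f \<theta> i dk -
          (if f z (\<theta> i) = dl then 1 else 0) * y i dl / expo_prob Z f \<theta> i dl - (y i dk - y i dl) = X i z"
      if "i < N" for i
      using pos[OF that, of dk] pos[OF that, of dl]
      by (simp add: X_def A_def I_def r_def \<pi>_def field_simps)
    hence "(\<Sum>i<N. (if f z (\<theta> i) = dk then 1 else 0) * y i dk / expo_prob Z f \<theta> i dk -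
          (if f z (\<theta> i) = dl then 1 else 0) * y i dl / expo_prob Z f \<theta> i dl) - (\<Sum>i<N. y i dk - y i dl)
          = (\<Sum>i<N. X i z)"
      by (simp add: sum_subtractf[symmetric])
    thus ?thesis unfolding W_def HT_est_def avg_effect_def by (simp add: diff_divide_distrib[symmetric])
  qed
  have EW2: "(\<Sum>z\<in>S. p z * (W z)\<^sup>2) = (1 / real N)\<^sup>2 * (\<Sum>i<N. \<Sum>j<N. \<Sum>z\<in>S. p z * (X i z * X j z))"
  proof -
    have "p z * (W z)\<^sup>2 = (1 / real N)\<^sup>2 * (\<Sum>i<N. \<Sum>j<N. p z * (X i z * X j z))" for z
      by (simp add: Wexp power2_eq_square sum_product sum_distrib_left algebra_simps)
    hence "(\<Sum>z\<in>S. p z * (W z)\<^sup>2) = (1 / real N)\<^sup>2 * (\<Sum>z\<in>S. \<Sum>i<N. \<Sum>j<N. p z * (X i z * X j z))"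
      by (simp add: sum_distrib_left)
    also have "(\<Sum>z\<in>S. \<Sum>i<N. \<Sum>j<N. p z * (X i z * X j z)) = (\<Sum>i<N. \<Sum>j<N. \<Sum>z\<in>S. p z * (X i z * X j z))"
      by (simp add: sum.swap[of _ S] )
    finally show ?thesis .
  qed
  have Xb: "\<bar>\<Sum>z\<in>S. p z * (X i z * X j z)\<bar> \<le> c * c * (g dk dk i j + g dk dl i j + g dl dk i j + g dl dl i j)"
    if "i < N" "j < N" for i j
  proof -
    have "(\<Sum>z\<in>S. p z * (X i z * X j z)) = (\<Sum>z\<in>S. p z * (A i dk z * A j dk z)) - (\<Sum>z\<in>S. p z * (A i dk z * A j dl z))
       - (\<Sum>z\<in>S. p z * (A i dl z * A j dk z)) + (\<Sum>z\<in>S. p z * (A i dl z * A j dl z))"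
      by (simp add: X_def algebra_simps sum.distrib sum_subtractf)
    moreover have b1: "\<bar>\<Sum>z\<in>S. p z * (A i dk z * A j dk z)\<bar> \<le> c * c * g dk dk i j" using covb that by simp
    moreover have b2: "\<bar>\<Sum>z\<in>S. p z * (A i dk z * A j dl z)\<bar> \<le> c * c * g dk dl i j" using covb that by simp
    moreover have b3: "\<bar>\<Sum>z\<in>S. p z * (A i dl z * A j dk z)\<bar> \<le> c * c * g dl dk i j" using covb that by simp
    moreover have b4: "\<bar>\<Sum>z\<in>S. p z * (A i dl z * A j dl z)\<bar> \<le> c * c * g dl dl i j" using covb that by simp
    ultimately show ?thesis by (simp add: distrib_left abs_le_iff)
  qed
  have gsum: "(\<Sum>i<N. \<Sum>j<N. g a b i j) = real (dep_pairs N Z f \<theta> a b)" for a b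
    unfolding dep_pairs_def card_pairs_sum g_def J_def \<pi>_def ..
  have "measure_pmf.prob Z {z. \<epsilon> < \<bar>W z\<bar>} = (\<Sum>z\<in>S. p z * (if \<epsilon> < \<bar>W z\<bar> then 1 else 0))"
    unfolding S_def p_def by (rule prob_sum[OF fin])
  also have "\<dots> \<le> (\<Sum>z\<in>S. p z * ((W z)\<^sup>2 / \<epsilon>\<^sup>2))"
  proof (rule sum_mono)
    fix z
    have "(if \<epsilon> < \<bar>W z\<bar> then 1 else 0) \<le> (W z)\<^sup>2 / \<epsilon>\<^sup>2"
    proof (cases "\<epsilon> < \<bar>W z\<bar>")
      case True
      hence "\<epsilon>\<^sup>2 \<le> (W z)\<^sup>2" using eps
        by (metis abs_le_square_iff abs_of_pos less_imp_le)
      thus ?thesis using True eps by simp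
    qed simp
    thus "p z * (if \<epsilon> < \<bar>W z\<bar> then 1 else 0) \<le> p z * ((W z)\<^sup>2 / \<epsilon>\<^sup>2)"
      using pnn[of z] by (rule mult_left_mono)
  qed
  also have "\<dots> = (\<Sum>z\<in>S. p z * (W z)\<^sup>2) / \<epsilon>\<^sup>2" by (simp add: sum_divide_distrib)
  also have "\<dots> = (1 / real N)\<^sup>2 * (\<Sum>i<N. \<Sum>j<N. \<Sum>z\<in>S. p z * (X i z * X j z)) / \<epsilon>\<^sup>2" by (simp add: EW2)
  also have "\<dots> \<le> (1 / real N)\<^sup>2 * (\<Sum>i<N. \<Sum>j<N. c * c * (g dk dk i j + g dk dl i j + g dl dk i j + g dl dl i j)) / \<epsilon>\<^sup>2"
  proof -
    have "(\<Sum>i<N. \<Sum>j<N. \<Sum>z\<in>S. p z * (X i z * X j z)) \<le> (\<Sum>i<N. \<Sum>j<N. c * c * (g dk dk i j + g dk dl i j + g dl dk i j + g dl dl i j))"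
      by (intro sum_mono) (simp add: Xb[THEN abs_le_D1])
    thus ?thesis by (intro divide_right_mono mult_left_mono) auto
  qed
  also have "\<dots> = c\<^sup>2 / \<epsilon>\<^sup>2 * (real (dep_pairs N Z f \<theta> dk dk) / (real N)\<^sup>2 + real (dep_pairs N Z f \<theta> dk dl) / (real N)\<^sup>2
          + real (dep_pairs N Z f \<theta> dl dk) / (real N)\<^sup>2 + real (dep_pairs N Z f \<theta> dl dl) / (real N)\<^sup>2)"
    using Npos eps by (simp add: sum_distrib_left[symmetric] sum.distrib gsum power2_eq_square add_divide_distrib four_div)
  finally show ?thesis unfolding W_def by simp
qed


theorem mainTheorem4:
  fixes N :: "nat \<Rightarrow> nat"
    and Z :: "nat \<Rightarrow> 'z pmf"
    and \<Delta> :: "nat \<Rightarrow> 'd set"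
    and f :: "nat \<Rightarrow> 'z \<Rightarrow> 't \<Rightarrow> 'd"
    and \<theta> :: "nat \<Rightarrow> nat \<Rightarrow> 't"
    and y :: "nat \<Rightarrow> nat \<Rightarrow> 'd \<Rightarrow> real"
    and dk dl :: 'd
  assumes N_lim: "filterlim N at_top sequentially"
    and Omega_fin: "\<And>m. finite (set_pmf (Z m))"
    and Delta_fin: "\<And>m. finite (\<Delta> m)"
    and f_range: "\<And>m z i. z \<in> set_pmf (Z m) \<Longrightarrow> i < N m \<Longrightarrow> f m z (\<theta> m i) \<in> \<Delta> m"
    and dk_in: "\<And>m. dk \<in> \<Delta> m" and dl_in: "\<And>m. dl \<in> \<Delta> m"
    and pi_pos: "\<And>m i d. i < N m \<Longrightarrow> d \<in> \<Delta> m \<Longrightarrow> 0 < expo_prob (Z m) (f m) (\<theta> m) i d"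
    and pi_lt1: "\<And>m i d. i < N m \<Longrightarrow> d \<in> \<Delta> m \<Longrightarrow> expo_prob (Z m) (f m) (\<theta> m) i d < 1"
    and cond1: "\<exists>c. \<forall>m i d. i < N m \<longrightarrow> d \<in> \<Delta> m \<longrightarrow>
                   \<bar>y m i d\<bar> / expo_prob (Z m) (f m) (\<theta> m) i d \<le> c"
    and cond2: "\<And>a b. a \<in> {dk, dl} \<Longrightarrow> b \<in> {dk, dl} \<Longrightarrow>
                   (\<lambda>m. real (dep_pairs (N m) (Z m) (f m) (\<theta> m) a b)) \<in> o(\<lambda>m. (real (N m))\<^sup>2)"
  shows "\<forall>\<epsilon>>0. (\<lambda>m. measure_pmf.prob (Z m)
            {z. \<bar>HT_est (N m) (Z m) (f m) (\<theta> m) (y m) dk dl z - avg_effect (N m) (y m) dk dl\<bar> > \<epsilon>})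
          \<longlonglongrightarrow> 0"
proof (intro allI impI)
  fix \<epsilon> :: real assume eps: "\<epsilon> > 0"
  obtain c where c: "\<And>m i d. i < N m \<Longrightarrow> d \<in> \<Delta> m \<Longrightarrow> \<bar>y m i d\<bar> / expo_prob (Z m) (f m) (\<theta> m) i d \<le> c"
    using cond1 by blast
  define q where "q = (\<lambda>a b m. real (dep_pairs (N m) (Z m) (f m) (\<theta> m) a b) / (real (N m))\<^sup>2)"
  have q0: "(\<lambda>m. q a b m) \<longlonglongrightarrow> 0" if "a \<in> {dk, dl}" "b \<in> {dk, dl}" for a b
    unfolding q_def by (rule smalloD_tendsto[OF cond2[OF that]])
  have lim: "(\<lambda>m. c\<^sup>2 / \<epsilon>\<^sup>2 * (q dk dk m + q dk dl m + q dl dk m + q dl dl m)) \<longlonglongrightarrow> 0"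
  proof -
    have "(\<lambda>m. q dk dk m + q dk dl m + q dl dk m + q dl dl m) \<longlonglongrightarrow> 0"
      by (intro tendsto_add_zero q0) auto
    from tendsto_mult[OF tendsto_const this, of "c\<^sup>2 / \<epsilon>\<^sup>2"] show ?thesis by simp
  qed
  have ev: "eventually (\<lambda>m. N m > 0) sequentially"
    proof -
    have "\<forall>\<^sub>F m in sequentially. 1 \<le> N m" using N_lim unfolding filterlim_at_top by blast
    thus ?thesis by (rule eventually_mono) simp
  qed
  show "(\<lambda>m. measure_pmf.prob (Z m)
            {z. \<bar>HT_est (N m) (Z m) (f m) (\<theta> m) (y m) dk dl z - avg_effect (N m) (y m) dk dl\<bar> > \<epsilon>})
          \<longlonglongrightarrow> 0"
  proof (rule tendsto_sandwich[OF _ _ tendsto_const lim])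
    show "\<forall>\<^sub>F m in sequentially. 0 \<le> measure_pmf.prob (Z m)
            {z. \<bar>HT_est (N m) (Z m) (f m) (\<theta> m) (y m) dk dl z - avg_effect (N m) (y m) dk dl\<bar> > \<epsilon>}"
      by simp
    show "\<forall>\<^sub>F m in sequentially. measure_pmf.prob (Z m)
            {z. \<bar>HT_est (N m) (Z m) (f m) (\<theta> m) (y m) dk dl z - avg_effect (N m) (y m) dk dl\<bar> > \<epsilon>}
          \<le> c\<^sup>2 / \<epsilon>\<^sup>2 * (q dk dk m + q dk dl m + q dl dk m + q dl dl m)"
      using ev
    proof (rule eventually_mono)
      fix m assume "N m > 0"
      show "measure_pmf.prob (Z m)
            {z. \<bar>HT_est (N m) (Z m) (f m) (\<theta> m) (y m) dk dl z - avg_effect (N m) (y m) dk dl\<bar> > \<epsilon>}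
          \<le> c\<^sup>2 / \<epsilon>\<^sup>2 * (q dk dk m + q dk dl m + q dl dk m + q dl dl m)"
      proof -
        have P: "0 < expo_prob (Z m) (f m) (\<theta> m) i d" if "i < N m" "d \<in> {dk, dl}" for i d
          using pi_pos[OF that(1)] that(2) dk_in dl_in by blast
        have C: "\<bar>y m i d\<bar> / expo_prob (Z m) (f m) (\<theta> m) i d \<le> c" if "i < N m" "d \<in> {dk, dl}" for i d
          using c[OF that(1)] that(2) dk_in dl_in by blast
        show ?thesis unfolding q_def by (rule bound[OF Omega_fin P C eps \<open>N m > 0\<close>])
      qed
    qed
  qed
qed

end
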